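(* For $\lambda,\mu\in\mathbb{C}$ and pure-parity $f\in\mathcal{F}_\lambda$, $g\in\mathcal{F}_\mu$, define $$(f,g)=\mu\,\overline{D}(f)\,g-(-1)^{\sigma(f)}\,\lambda\,f\,\overline{D}(g)\in\mathcal{F}_{\lambda+\mu+\frac12},\qquad [f,g]=\mu\,f'\,g-\lambda\,f\,g'-(-1)^{\sigma(f)}\,\tfrac12\,\overline{D}(f)\,\overline{D}(g)\in\mathcal{F}_{\lambda+\mu+1}.$$ Then for every pure-parity $f\in\mathcal{F}_{-1}$ and all $\mu,\nu\in\mathbb{C}$ and pure-parity $g\in\mathcal{F}_\mu$, $h\in\mathcal{F}_\nu$, $$[f,(g,h)]=(-1)^{\sigma(f)}\,([f,g],h)+(-1)^{\sigma(f)(\sigma(g)+1)}\,(g,[f,h]).$$ That is, the odd operation $(\,,\,)$ on $\mathcal{F}=\bigoplus_\lambda\mathcal{F}_\lambda$ is invariant under the Lie superalgebra $\mathcal{K}(1)=(\mathcal{F}_{-1},[\,,\,])$.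
   Context: The supercircle $S^{1|1}$ has superalgebra of functions $C^\infty_{\mathbb{C}}(S^1)[\xi]$: elements $f=f_0(x)+\xi f_1(x)$ with $f_0,f_1$ smooth complex functions on $S^1$, $x$ the (affine) coordinate, $\xi$ odd with $\xi^2=0$, $x\xi=\xi x$. Parity: $\sigma(f_0)=0$, $\sigma(\xi f_1)=1$. Write $f'=\partial_x f=f_0'+\xi f_1'$, $\partial_\xi f=f_1$, and $\overline{D}=\partial_\xi-\xi\,\partial_x$. For $\lambda\in\mathbb{C}$, $\mathcal{F}_\lambda$ denotes a copy of $C^\infty_{\mathbb{C}}(S^{1|1})$ labelled by the weight $\lambda$; in each bracket the weights used in the formula are those of the spaces the arguments belong to (e.g. in $[f,g]$ with $f\in\mathcal{F}_{-1}$, $g\in\mathcal{F}_\mu$ one uses $\lambda=-1$; in $[f,(g,h)]$ the second argument has weight $\mu+\nu+\frac12$). *)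

theory Defs
  imports "HOL-Analysis.Analysis"
begin

text \<open>A superfunction f = f0(x) + xi f1(x) on the supercircle S^{1|1} is represented
  by the pair (f0, f1) of complex functions of the affine coordinate x.
  S^1 = R / Z, so functions on S^1 are 1-periodic functions on R.\<close>

type_synonym sfun = "(real \<Rightarrow> complex) \<times> (real \<Rightarrow> complex)"

definition smooth_fun :: "(real \<Rightarrow> complex) \<Rightarrow> bool" where
  "smooth_fun u \<longleftrightarrow> (\<exists>d. d 0 = u \<and> (\<forall>n x. (d n has_vector_derivative d (Suc n) x) (at x)))"

definition circle_fun :: "(real \<Rightarrow> complex) \<Rightarrow> bool" where
  "circle_fun u \<longleftrightarrow> smooth_fun u \<and> (\<forall>x. u (x + 1) = u x)"

definition is_sfun :: "sfun \<Rightarrow> bool" where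
  "is_sfun f \<longleftrightarrow> circle_fun (fst f) \<and> circle_fun (snd f)"

definition hom :: "nat \<Rightarrow> sfun \<Rightarrow> bool" where
  "hom s f \<longleftrightarrow> (even s \<longrightarrow> snd f = (\<lambda>x. 0)) \<and> (odd s \<longrightarrow> fst f = (\<lambda>x. 0))"

definition sadd :: "sfun \<Rightarrow> sfun \<Rightarrow> sfun" where
  "sadd f g = ((\<lambda>x. fst f x + fst g x), (\<lambda>x. snd f x + snd g x))"

definition ssub :: "sfun \<Rightarrow> sfun \<Rightarrow> sfun" where
  "ssub f g = ((\<lambda>x. fst f x - fst g x), (\<lambda>x. snd f x - snd g x))"

definition sscale :: "complex \<Rightarrow> sfun \<Rightarrow> sfun" where
  "sscale c f = ((\<lambda>x. c * fst f x), (\<lambda>x. c * snd f x))"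

text \<open>(f0 + xi f1)(g0 + xi g1) = f0 g0 + xi (f1 g0 + f0 g1), using xi^2 = 0.\<close>
definition smult :: "sfun \<Rightarrow> sfun \<Rightarrow> sfun" where
  "smult f g = ((\<lambda>x. fst f x * fst g x), (\<lambda>x. snd f x * fst g x + fst f x * snd g x))"

definition sderiv :: "sfun \<Rightarrow> sfun" where
  "sderiv f = ((\<lambda>x. vector_derivative (fst f) (at x)), (\<lambda>x. vector_derivative (snd f) (at x)))"

text \<open>Dbar = d/dxi - xi d/dx, so Dbar(f0 + xi f1) = f1 - xi f0'.\<close>
definition Dbar :: "sfun \<Rightarrow> sfun" where
  "Dbar f = (snd f, (\<lambda>x. - vector_derivative (fst f) (at x)))"

definition pbr :: "complex \<Rightarrow> complex \<Rightarrow> nat \<Rightarrow> sfun \<Rightarrow> sfun \<Rightarrow> sfun" where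
  "pbr lam mu s f g = ssub (sscale mu (smult (Dbar f) g)) (sscale ((-1) ^ s * lam) (smult f (Dbar g)))"

definition lbr :: "complex \<Rightarrow> complex \<Rightarrow> nat \<Rightarrow> sfun \<Rightarrow> sfun \<Rightarrow> sfun" where
  "lbr lam mu s f g = ssub (ssub (sscale mu (smult (sderiv f) g)) (sscale lam (smult f (sderiv g))))
      (sscale ((-1) ^ s / 2) (smult (Dbar f) (Dbar g)))"

end

theory Submission
  imports Defs
begin

definition smd :: "(nat \<Rightarrow> real \<Rightarrow> complex) \<Rightarrow> bool" where
  "smd d \<longleftrightarrow> (\<forall>n x. (d n has_vector_derivative d (Suc n) x) (at x))"

lemma smd_vd [simp]: "smd d \<Longrightarrow> vector_derivative (d n) (at x) = d (Suc n) x"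
  unfolding smd_def by (meson vector_derivative_at)

lemma smd_diff [simp]: "smd d \<Longrightarrow> d n differentiable (at x)"
  unfolding smd_def using differentiableI_vector by blast

lemma get_smd: "circle_fun u \<Longrightarrow> \<exists>d. smd d \<and> u = d 0"
  unfolding circle_fun_def smooth_fun_def smd_def by blast

lemma vd_div [simp]: "f differentiable (at a) \<Longrightarrow> vector_derivative (\<lambda>x. f x / (c::complex)) (at a) = vector_derivative f (at a) / c"
  using vector_derivative_mult_at[of f a "\<lambda>x. inverse c"] by (simp add: divide_inverse)

lemma diff_div [simp]: "f differentiable (at a) \<Longrightarrow> (\<lambda>x. f x / (c::complex)) differentiable (at a)"
  by (simp add: divide_inverse)

lemma hom_e: "hom s (p, q) \<Longrightarrow> even s \<Longrightarrow> q = (\<lambda>x. 0)" by (simp add: hom_def)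
lemma hom_o: "hom s (p, q) \<Longrightarrow> odd s \<Longrightarrow> p = (\<lambda>x. 0)" by (simp add: hom_def)

lemma main:
  fixes mu nu :: complex and sf sg sh :: nat
  assumes "smd a0" "smd a1" "smd b0" "smd b1" "smd c0" "smd c1"
    and "hom sf (a0 0, a1 0)" and "hom sg (b0 0, b1 0)" and "hom sh (c0 0, c1 0)"
  shows "lbr (-1) (mu + nu + 1/2) sf (a0 0, a1 0) (pbr mu nu sg (b0 0, b1 0) (c0 0, c1 0)) =
         sadd (sscale ((-1) ^ sf) (pbr mu nu (sf + sg) (lbr (-1) mu sf (a0 0, a1 0) (b0 0, b1 0)) (c0 0, c1 0)))
              (sscale ((-1) ^ (sf * (sg + 1))) (pbr mu nu sg (b0 0, b1 0) (lbr (-1) nu sf (a0 0, a1 0) (c0 0, c1 0))))"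
proof -
  note defs = lbr_def pbr_def sadd_def ssub_def sscale_def smult_def sderiv_def Dbar_def
  show ?thesis
  proof (cases "even sf")
    case p0: True
    show ?thesis
    proof (cases "even sg")
      case p1: True
      show ?thesis
      proof (cases "even sh")
        case p2: True
        show ?thesis using assms(1-6) p0 p1 p2 by (simp add: defs hom_e[OF assms(7) p0] hom_e[OF assms(8) p1] hom_e[OF assms(9) p2] fun_eq_iff minus_one_power_iff algebra_simps)
      next
        case p2: False
        show ?thesis using assms(1-6) p0 p1 p2 by (simp add: defs hom_e[OF assms(7) p0] hom_e[OF assms(8) p1] hom_o[OF assms(9) p2] fun_eq_iff minus_one_power_iff algebra_simps)
      qed
    next
      case p1: False
      show ?thesis
      proof (cases "even sh")
        case p2: True
        show ?thesis using assms(1-6) p0 p1 p2 by (simp add: defs hom_e[OF assms(7) p0] hom_o[OF assms(8) p1] hom_e[OF assms(9) p2] fun_eq_iff minus_one_power_iff algebra_simps)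
      next
        case p2: False
        show ?thesis using assms(1-6) p0 p1 p2 by (simp add: defs hom_e[OF assms(7) p0] hom_o[OF assms(8) p1] hom_o[OF assms(9) p2] fun_eq_iff minus_one_power_iff algebra_simps)
      qed
    qed
  next
    case p0: False
    show ?thesis
    proof (cases "even sg")
      case p1: True
      show ?thesis
      proof (cases "even sh")
        case p2: True
        show ?thesis using assms(1-6) p0 p1 p2 by (simp add: defs hom_o[OF assms(7) p0] hom_e[OF assms(8) p1] hom_e[OF assms(9) p2] fun_eq_iff minus_one_power_iff algebra_simps)
      next
        case p2: False
        show ?thesis using assms(1-6) p0 p1 p2 by (simp add: defs hom_o[OF assms(7) p0] hom_e[OF assms(8) p1] hom_o[OF assms(9) p2] fun_eq_iff minus_one_power_iff algebra_simps)
      qed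
    next
      case p1: False
      show ?thesis
      proof (cases "even sh")
        case p2: True
        show ?thesis using assms(1-6) p0 p1 p2 by (simp add: defs hom_o[OF assms(7) p0] hom_o[OF assms(8) p1] hom_e[OF assms(9) p2] fun_eq_iff minus_one_power_iff algebra_simps) (simp add: field_simps)
      next
        case p2: False
        show ?thesis using assms(1-6) p0 p1 p2 by (simp add: defs hom_o[OF assms(7) p0] hom_o[OF assms(8) p1] hom_o[OF assms(9) p2] fun_eq_iff minus_one_power_iff algebra_simps)
      qed
    qed
  qed
qed

theorem proposition2p2:
  fixes f g h :: sfun and mu nu :: complex and sf sg sh :: nat
  assumes "is_sfun f" and "is_sfun g" and "is_sfun h"
    and "hom sf f" and "hom sg g" and "hom sh h"
  shows "lbr (-1) (mu + nu + 1/2) sf f (pbr mu nu sg g h) =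
         sadd (sscale ((-1) ^ sf) (pbr mu nu (sf + sg) (lbr (-1) mu sf f g) h))
              (sscale ((-1) ^ (sf * (sg + 1))) (pbr mu nu sg g (lbr (-1) nu sf f h)))"
proof -
  obtain a0 a1 b0 b1 c0 c1 where d: "smd a0" "smd a1" "smd b0" "smd b1" "smd c0" "smd c1"
    and e: "f = (a0 0, a1 0)" "g = (b0 0, b1 0)" "h = (c0 0, c1 0)"
    using assms(1-3) get_smd unfolding is_sfun_def by (metis prod.collapse)
  show ?thesis using main[OF d, of sf sg sh mu nu] assms(4-6) unfolding e by blast
qed

end
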